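(* Let $G$ be a finite group acting $2$-transitively on a finite set $X$, let $x\in X$, and suppose the stabilizer $H=\mathrm{Stab}_G(x)$ is mixable. Then $G$ is mixable, and \[\mathrm{mixlen}(G)\le \mathrm{mixlen}(H)+\mathrm{mixlen}(H,X\setminus\{x\})+1.\]
   Context: For a finite group $G$, a random subproduct is a random element $g_1^{\epsilon_1}\cdots g_k^{\epsilon_k}$ with $g_1,\dots,g_k\in G$ fixed and $\epsilon_1,\dots,\epsilon_k$ independent Bernoulli random variables, $\epsilon_i\sim\mathrm{Ber}(p_i)$, $p_i\in[0,1]$; $k$ is its length. $G$ is mixable if some random subproduct is exactly uniform on $G$, and $\mathrm{mixlen}(G)$ is the minimal such length. For a transitive action of a group $H$ on a finite set $Y$, the action is mixable if for some (equivalently every) $y_0\in Y$ there is a random subproduct $\mathbf{h}$ in $H$ with $\mathbf{h}y_0$ uniform on $Y$, and $\mathrm{mixlen}(H,Y)$ is the minimal length of such a random subproduct. (By $2$-transitivity, $H$ acts transitively on $X\setminus\{x\}$.) *)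

theory Defs
  imports Complex_Main "HOL-Algebra.Group_Action"
begin

fun subprod :: "('a, 'm) monoid_scheme \<Rightarrow> 'a list \<Rightarrow> bool list \<Rightarrow> 'a" where
  "subprod G (g # gs) (e # es) = (if e then g else \<one>\<^bsub>G\<^esub>) \<otimes>\<^bsub>G\<^esub> subprod G gs es"
| "subprod G _ _ = \<one>\<^bsub>G\<^esub>"

text \<open>Probability of the outcome vector es for independent Bernoulli(p_i) variables.\<close>
definition bern_weight :: "real list \<Rightarrow> bool list \<Rightarrow> real" where
  "bern_weight ps es = (\<Prod>i<length ps. if es ! i then ps ! i else 1 - ps ! i)"

definition subprod_prob ::
  "('a, 'm) monoid_scheme \<Rightarrow> ('a \<Rightarrow> 'b) \<Rightarrow> 'a list \<Rightarrow> real list \<Rightarrow> 'b \<Rightarrow> real" where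
  "subprod_prob G f gs ps a =
     (\<Sum>es\<in>{es. length es = length gs}. if f (subprod G gs es) = a then bern_weight ps es else 0)"

definition valid_subproduct :: "('a, 'm) monoid_scheme \<Rightarrow> 'a list \<Rightarrow> real list \<Rightarrow> bool" where
  "valid_subproduct G gs ps \<longleftrightarrow>
     set gs \<subseteq> carrier G \<and> length ps = length gs \<and> (\<forall>p\<in>set ps. 0 \<le> p \<and> p \<le> 1)"

definition mixing_subproduct :: "('a, 'm) monoid_scheme \<Rightarrow> 'a list \<Rightarrow> real list \<Rightarrow> bool" where
  "mixing_subproduct G gs ps \<longleftrightarrow> valid_subproduct G gs ps \<and>
     (\<forall>a\<in>carrier G. subprod_prob G id gs ps a = 1 / real (card (carrier G)))"

definition mixable :: "('a, 'm) monoid_scheme \<Rightarrow> bool" where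
  "mixable G \<longleftrightarrow> (\<exists>gs ps. mixing_subproduct G gs ps)"

definition mixlen :: "('a, 'm) monoid_scheme \<Rightarrow> nat" where
  "mixlen G = (LEAST k. \<exists>gs ps. length gs = k \<and> mixing_subproduct G gs ps)"

definition mixing_action_subproduct ::
  "('a, 'm) monoid_scheme \<Rightarrow> ('a \<Rightarrow> 'b \<Rightarrow> 'b) \<Rightarrow> 'b set \<Rightarrow> 'b \<Rightarrow> 'a list \<Rightarrow> real list \<Rightarrow> bool" where
  "mixing_action_subproduct H \<phi> Y y0 gs ps \<longleftrightarrow> valid_subproduct H gs ps \<and>
     (\<forall>y\<in>Y. subprod_prob H (\<lambda>h. \<phi> h y0) gs ps y = 1 / real (card Y))"

definition mixable_action :: "('a, 'm) monoid_scheme \<Rightarrow> ('a \<Rightarrow> 'b \<Rightarrow> 'b) \<Rightarrow> 'b set \<Rightarrow> bool" where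
  "mixable_action H \<phi> Y \<longleftrightarrow> (\<exists>y0\<in>Y. \<exists>gs ps. mixing_action_subproduct H \<phi> Y y0 gs ps)"

definition mixlen_action :: "('a, 'm) monoid_scheme \<Rightarrow> ('a \<Rightarrow> 'b \<Rightarrow> 'b) \<Rightarrow> 'b set \<Rightarrow> nat" where
  "mixlen_action H \<phi> Y =
     (LEAST k. \<exists>y0\<in>Y. \<exists>gs ps. length gs = k \<and> mixing_action_subproduct H \<phi> Y y0 gs ps)"

definition two_transitive_action :: "('a, 'm) monoid_scheme \<Rightarrow> 'b set \<Rightarrow> ('a \<Rightarrow> 'b \<Rightarrow> 'b) \<Rightarrow> bool" where
  "two_transitive_action G X \<phi> \<longleftrightarrow> group_action G X \<phi> \<and> 2 \<le> card X \<and>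
     (\<forall>x1\<in>X. \<forall>x2\<in>X. \<forall>y1\<in>X. \<forall>y2\<in>X. x1 \<noteq> x2 \<longrightarrow> y1 \<noteq> y2 \<longrightarrow>
        (\<exists>g\<in>carrier G. \<phi> g x1 = y1 \<and> \<phi> g x2 = y2))"

end

theory Submission
  imports Defs
begin

lemma subprod_update[simp]: "subprod (G\<lparr>carrier := S\<rparr>) = subprod G"
proof (intro ext)
  fix gs es show "subprod (G\<lparr>carrier := S\<rparr>) gs es = subprod G gs es"
    by (induction gs arbitrary: es; case_tac es; simp)
qed

lemma subprod_prob_update[simp]: "subprod_prob (G\<lparr>carrier := S\<rparr>) = subprod_prob G"
  by (intro ext) (simp add: subprod_prob_def)

lemma subprod_closed:
  assumes "subgroup K G" "set gs \<subseteq> K"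
  shows "subprod G gs es \<in> K"
  using assms(2)
proof (induction gs arbitrary: es)
  case Nil then show ?case using subgroup.one_closed[OF assms(1)] by simp
next
  case (Cons g gs)
  then show ?case
    using subgroup.one_closed[OF assms(1)] subgroup.m_closed[OF assms(1)]
    by (cases es) auto
qed

lemma subprod_append:
  assumes "group G" "set gs1 \<subseteq> carrier G" "set gs2 \<subseteq> carrier G" "length e1 = length gs1"
  shows "subprod G (gs1 @ gs2) (e1 @ e2) = subprod G gs1 e1 \<otimes>\<^bsub>G\<^esub> subprod G gs2 e2"
  using assms(2,4)
proof (induction gs1 arbitrary: e1)
  case Nil
  interpret group G by fact
  have "subprod G gs2 e2 \<in> carrier G"
    using subprod_closed[OF subgroup_self assms(3)] .
  with Nil show ?case by simp
next
  case (Cons g gs)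
  interpret group G by fact
  obtain e es where e1: "e1 = e # es" using Cons by (cases e1) auto
  have c1: "subprod G gs es \<in> carrier G" using subprod_closed[OF subgroup_self] Cons by auto
  have c2: "subprod G gs2 e2 \<in> carrier G" using subprod_closed[OF subgroup_self assms(3)] .
  have "(if e then g else \<one>\<^bsub>G\<^esub>) \<in> carrier G" using Cons by auto
  then show ?case using Cons e1 c1 c2 by (simp add: m_assoc)
qed

lemma bern_weight_Nil[simp]: "bern_weight [] es = 1"
  by (simp add: bern_weight_def)

lemma bern_weight_Cons[simp]:
  "bern_weight (p # ps) (e # es) = (if e then p else 1 - p) * bern_weight ps es"
  unfolding bern_weight_def
  by (simp only: length_Cons prod.lessThan_Suc_shift nth_Cons_Suc nth_Cons_0)

lemma bern_weight_append:
  "length e1 = length ps1 \<Longrightarrow>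
   bern_weight (ps1 @ ps2) (e1 @ e2) = bern_weight ps1 e1 * bern_weight ps2 e2"
proof (induction ps1 arbitrary: e1)
  case Nil then show ?case by simp
next
  case (Cons p ps) then show ?case by (cases e1) auto
qed

lemma finite_len: "finite {es :: 'c list. length es = n}" if "finite (UNIV :: 'c set)"
  using finite_lists_length_eq[OF that, of n] by simp

lemma split_set:
  "{es. length es = n + m} = (\<lambda>(a, b). a @ b) ` ({a. length a = n} \<times> {b. length b = m})"
proof (rule Set.set_eqI)
  fix es
  show "es \<in> {es. length es = n + m} \<longleftrightarrow> es \<in> (\<lambda>(a, b). a @ b) ` ({a. length a = n} \<times> {b. length b = m})"
  proof
    assume "es \<in> {es. length es = n + m}"
    then show "es \<in> (\<lambda>(a, b). a @ b) ` ({a. length a = n} \<times> {b. length b = m})"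
      by (intro image_eqI[where x="(take n es, drop n es)"]) auto
  qed auto
qed

lemma split_inj: "inj_on (\<lambda>(a, b). a @ b) ({a. length a = n} \<times> {b. length b = m})"
  by (auto simp: inj_on_def)

lemma prob_append:
  assumes "group G" "set gs1 \<subseteq> carrier G" "set gs2 \<subseteq> carrier G"
    "length ps1 = length gs1" "length ps2 = length gs2"
  shows "subprod_prob G f (gs1 @ gs2) (ps1 @ ps2) y =
    (\<Sum>e1\<in>{e. length e = length gs1}. bern_weight ps1 e1 *
        subprod_prob G (\<lambda>g. f (subprod G gs1 e1 \<otimes>\<^bsub>G\<^esub> g)) gs2 ps2 y)"
proof -
  let ?A = "{e :: bool list. length e = length gs1}"
  let ?B = "{e :: bool list. length e = length gs2}"
  have "subprod_prob G f (gs1 @ gs2) (ps1 @ ps2) y =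
     (\<Sum>es\<in>(\<lambda>(a, b). a @ b) ` (?A \<times> ?B).
        if f (subprod G (gs1 @ gs2) es) = y then bern_weight (ps1 @ ps2) es else 0)"
    unfolding subprod_prob_def length_append split_set by (rule refl)
  also have "\<dots> = (\<Sum>(a, b)\<in>?A \<times> ?B.
        if f (subprod G (gs1 @ gs2) (a @ b)) = y then bern_weight (ps1 @ ps2) (a @ b) else 0)"
    by (subst sum.reindex[OF split_inj]) (auto intro!: sum.cong)
  also have "\<dots> = (\<Sum>(a, b)\<in>?A \<times> ?B. bern_weight ps1 a *
        (if f (subprod G gs1 a \<otimes>\<^bsub>G\<^esub> subprod G gs2 b) = y then bern_weight ps2 b else 0))"
    by (intro sum.cong refl)
       (auto simp: subprod_append[OF assms(1-3)] bern_weight_append assms(4))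
  also have "\<dots> = (\<Sum>a\<in>?A. \<Sum>b\<in>?B. bern_weight ps1 a *
        (if f (subprod G gs1 a \<otimes>\<^bsub>G\<^esub> subprod G gs2 b) = y then bern_weight ps2 b else 0))"
    by (subst sum.cartesian_product) simp
  also have "\<dots> = (\<Sum>a\<in>?A. bern_weight ps1 a * (\<Sum>b\<in>?B.
        (if f (subprod G gs1 a \<otimes>\<^bsub>G\<^esub> subprod G gs2 b) = y then bern_weight ps2 b else 0)))"
    by (simp add: sum_distrib_left)
  finally show ?thesis unfolding subprod_prob_def by simp
qed

lemma len_one: "{e :: bool list. length e = 1} = {[True], [False]}"
proof (rule Set.set_eqI)
  fix e :: "bool list"
  show "e \<in> {e. length e = 1} \<longleftrightarrow> e \<in> {[True], [False]}"
    by (cases e) auto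
qed

lemma len_Suc: "{e :: 'c list. length e = Suc n} = (\<lambda>(a, b). a # b) ` (UNIV \<times> {b. length b = n})"
proof (rule Set.set_eqI)
  fix e :: "'c list"
  show "e \<in> {e. length e = Suc n} \<longleftrightarrow> e \<in> (\<lambda>(a, b). a # b) ` (UNIV \<times> {b. length b = n})"
    by (cases e) auto
qed

lemma sum_bern: "(\<Sum>es\<in>{es. length es = length ps}. bern_weight ps es) = 1"
proof (induction ps)
  case Nil
  have "{es :: bool list. length es = 0} = {[]}" by auto
  then show ?case by simp
next
  case (Cons p ps)
  have inj: "inj_on (\<lambda>(a, b). a # b) (UNIV \<times> {b :: bool list. length b = length ps})"
    by (auto simp: inj_on_def)
  have "(\<Sum>es\<in>{es. length es = length (p # ps)}. bern_weight (p # ps) es)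
      = (\<Sum>(a, b)\<in>UNIV \<times> {b :: bool list. length b = length ps}. bern_weight (p # ps) (a # b))"
    unfolding length_Cons len_Suc by (subst sum.reindex[OF inj]) (auto intro!: sum.cong)
  also have "\<dots> = (\<Sum>a\<in>UNIV. \<Sum>b\<in>{b :: bool list. length b = length ps}.
        (if a then p else 1 - p) * bern_weight ps b)"
    by (subst sum.cartesian_product) simp
  also have "\<dots> = (\<Sum>a\<in>UNIV. (if a then p else 1 - p))"
    by (simp add: sum_distrib_left[symmetric] Cons.IH)
  also have "\<dots> = 1" by (simp add: UNIV_bool)
  finally show ?case .
qed

lemma prob_single:
  assumes "group G" "t \<in> carrier G"
  shows "subprod_prob G f [t] [p] y =
    (if f t = y then p else 0) + (if f \<one>\<^bsub>G\<^esub> = y then 1 - p else 0)"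
proof -
  interpret group G by fact
  have "{e :: bool list. length e = length [t]} = {[True], [False]}" using len_one by simp
  then show ?thesis unfolding subprod_prob_def using assms(2) by simp
qed

lemma prob_fibers:
  assumes "finite T" "\<And>es. subprod G gs es \<in> T"
  shows "subprod_prob G f gs ps a = (\<Sum>h\<in>{h\<in>T. f h = a}. subprod_prob G id gs ps h)"
proof -
  let ?E = "{es :: bool list. length es = length gs}"
  have "(\<Sum>h\<in>{h\<in>T. f h = a}. subprod_prob G id gs ps h)
     = (\<Sum>h\<in>{h\<in>T. f h = a}. \<Sum>es\<in>?E. if subprod G gs es = h then bern_weight ps es else 0)"
    unfolding subprod_prob_def by simp
  also have "\<dots> = (\<Sum>es\<in>?E. \<Sum>h\<in>{h\<in>T. f h = a}. if subprod G gs es = h then bern_weight ps es else 0)"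
    by (rule sum.swap)
  also have "\<dots> = (\<Sum>es\<in>?E. if f (subprod G gs es) = a then bern_weight ps es else 0)"
    using assms by (intro sum.cong refl) (simp add: sum.delta')
  finally show ?thesis unfolding subprod_prob_def by simp
qed

lemma (in group_action) fiber_count:
  assumes K: "subgroup K G" and fin: "finite K"
    and Y: "Y \<subseteq> E" "x0 \<in> Y" "finite Y"
    and maps: "\<And>g. g \<in> K \<Longrightarrow> \<phi> g x0 \<in> Y"
    and tr: "\<And>y. y \<in> Y \<Longrightarrow> \<exists>g\<in>K. \<phi> g x0 = y"
    and y: "y \<in> Y"
  shows "card {g\<in>K. \<phi> g x0 = y} * card Y = card K"
proof -
  interpret group G using group_hom group_hom.axioms(1) by auto
  have KG: "K \<subseteq> carrier G" using K subgroup.subset by blast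
  have x0E: "x0 \<in> E" using Y by auto
  define F where "F z = {g\<in>K. \<phi> g x0 = z}" for z
  have cF: "card (F z) = card (F x0)" if z: "z \<in> Y" for z
  proof -
    obtain g where g: "g \<in> K" "\<phi> g x0 = z" using tr[OF z] by auto
    have gc: "g \<in> carrier G" using g KG by auto
    have "bij_betw (\<lambda>h. g \<otimes> h) (F x0) (F z)"
    proof (rule bij_betw_byWitness[where f'="\<lambda>h. inv g \<otimes> h"])
      show "\<forall>a\<in>F x0. inv g \<otimes> (g \<otimes> a) = a"
      proof
        fix a assume "a \<in> F x0"
        then have "a \<in> carrier G" using KG by (auto simp: F_def)
        then show "inv g \<otimes> (g \<otimes> a) = a" using gc by (simp add: m_assoc[symmetric])
      qed
      show "\<forall>a\<in>F z. g \<otimes> (inv g \<otimes> a) = a"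
      proof
        fix a assume "a \<in> F z"
        then have "a \<in> carrier G" using KG by (auto simp: F_def)
        then show "g \<otimes> (inv g \<otimes> a) = a" using gc by (simp add: m_assoc[symmetric])
      qed
      show "(\<lambda>h. g \<otimes> h) ` F x0 \<subseteq> F z"
      proof
        fix b assume "b \<in> (\<lambda>h. g \<otimes> h) ` F x0"
        then obtain h where h0: "h \<in> F x0" "b = g \<otimes> h" by blast
        then have h: "h \<in> K" "\<phi> h x0 = x0" "b = g \<otimes> h" by (simp_all add: F_def)
        have hc: "h \<in> carrier G" using h KG by auto
        have "b \<in> K" using h g subgroup.m_closed[OF K] by auto
        moreover have "\<phi> b x0 = \<phi> g (\<phi> h x0)" using composition_rule[OF x0E gc hc] h(3) by simp
        ultimately show "b \<in> F z" using h(2) g(2) by (simp add: F_def)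
      qed
      show "(\<lambda>h. inv g \<otimes> h) ` F z \<subseteq> F x0"
      proof
        fix b assume "b \<in> (\<lambda>h. inv g \<otimes> h) ` F z"
        then obtain h where h0: "h \<in> F z" "b = inv g \<otimes> h" by blast
        then have h: "h \<in> K" "\<phi> h x0 = z" "b = inv g \<otimes> h" by (simp_all add: F_def)
        have "inv g \<in> K" using subgroup.m_inv_closed[OF K g(1)] .
        then have "b \<in> K" using subgroup.m_closed[OF K _ h(1)] h(3) by simp
        moreover have "\<phi> b x0 = x0"
        proof -
          have hc: "h \<in> carrier G" using h KG by auto
          have "\<phi> b x0 = \<phi> (inv g) (\<phi> h x0)"
            using composition_rule[OF x0E inv_closed[OF gc] hc] h(3) by simp
          also have "\<dots> = x0" using orbit_sym_aux[OF gc x0E g(2)] h(2) by simp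
          finally show ?thesis .
        qed
        ultimately show "b \<in> F x0" by (simp add: F_def)
      qed
    qed
    then show ?thesis by (simp add: bij_betw_same_card)
  qed
  have Kun: "K = (\<Union>z\<in>Y. F z)" using maps unfolding F_def by blast
  have finF: "\<forall>z\<in>Y. finite (F z)" using fin unfolding F_def by simp
  have disj: "\<forall>i\<in>Y. \<forall>j\<in>Y. i \<noteq> j \<longrightarrow> F i \<inter> F j = {}" unfolding F_def by blast
  have "card K = (\<Sum>z\<in>Y. card (F z))"
    unfolding Kun by (rule card_UN_disjoint[OF Y(3) finF disj])
  also have "\<dots> = card Y * card (F x0)" using cF by simp
  finally show ?thesis using cF[OF y] by (simp add: F_def)
qed

lemma (in group_action) inner_lemma:
  assumes subS: "subgroup S G" and Sdef: "S = stabilizer G \<phi> x" and x: "x \<in> E"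
    and Bin: "\<And>es. subprod G B es \<in> S"
    and unif: "\<forall>h\<in>S. subprod_prob G id B pB h = 1 / real (card S)"
    and k: "k \<in> carrier G" and a: "a \<in> carrier G"
  shows "subprod_prob G (\<lambda>g. k \<otimes> g) B pB a = (if \<phi> a x = \<phi> k x then 1 / real (card S) else 0)"
proof -
  interpret group G using group_hom group_hom.axioms(1) by auto
  have SG: "S \<subseteq> carrier G" using subS subgroup.subset by blast
  have Bc: "subprod G B es \<in> carrier G" for es using Bin SG by blast
  have ika: "inv k \<otimes> a \<in> carrier G" using k a by simp
  have "subprod_prob G (\<lambda>g. k \<otimes> g) B pB a = subprod_prob G id B pB (inv k \<otimes> a)"
    unfolding subprod_prob_def
  proof (intro sum.cong refl)
    fix es
    have "(k \<otimes> subprod G B es = a) = (subprod G B es = inv k \<otimes> a)"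
      using inv_solve_left[OF Bc k a] by auto
    then show "(if k \<otimes> subprod G B es = a then bern_weight pB es else 0) =
        (if id (subprod G B es) = inv k \<otimes> a then bern_weight pB es else 0)" by simp
  qed
  also have "\<dots> = (if inv k \<otimes> a \<in> S then 1 / real (card S) else 0)"
  proof (cases "inv k \<otimes> a \<in> S")
    case True then show ?thesis using unif by simp
  next
    case False
    have "subprod G B es \<noteq> inv k \<otimes> a" for es using Bin[of es] False by auto
    then show ?thesis using False unfolding subprod_prob_def by simp
  qed
  also have "(inv k \<otimes> a \<in> S) = (\<phi> a x = \<phi> k x)"
  proof
    assume "inv k \<otimes> a \<in> S"
    then have e: "\<phi> (inv k \<otimes> a) x = x" using Sdef by (simp add: stabilizer_def)
    have "\<phi> a x = \<phi> (k \<otimes> (inv k \<otimes> a)) x" using k a by (simp add: m_assoc[symmetric])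
    also have "\<dots> = \<phi> k (\<phi> (inv k \<otimes> a) x)" using composition_rule[OF x k ika] .
    finally show "\<phi> a x = \<phi> k x" using e by simp
  next
    assume e: "\<phi> a x = \<phi> k x"
    have "\<phi> (inv k \<otimes> a) x = \<phi> (inv k) (\<phi> a x)" using composition_rule[OF x inv_closed[OF k] a] .
    also have "\<dots> = x" using orbit_sym_aux[OF k x] e by simp
    finally show "inv k \<otimes> a \<in> S" using Sdef ika by (simp add: stabilizer_def)
  qed
  finally show ?thesis .
qed

lemma (in group_action) left_lemma:
  assumes subS: "subgroup S G" and Sdef: "S = stabilizer G \<phi> x" and x: "x \<in> E"
    and finE: "finite E" and n2: "2 \<le> card E"
    and Ain: "\<And>es. subprod G A es \<in> S" and setA: "set A \<subseteq> S" and lenA: "length pA = length A"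
    and t: "t \<in> carrier G" "\<phi> t x = y0" and y0: "y0 \<in> E - {x}"
    and unifA: "\<forall>y\<in>E-{x}. subprod_prob G (\<lambda>h. \<phi> h y0) A pA y = 1 / real (card (E - {x}))"
    and p: "p = (real (card E) - 1) / real (card E)"
    and y: "y \<in> E"
  shows "subprod_prob G (\<lambda>g. \<phi> g x) (A @ [t]) (pA @ [p]) y = 1 / real (card E)"
proof -
  interpret group G using group_hom group_hom.axioms(1) by auto
  have SG: "S \<subseteq> carrier G" using subS subgroup.subset by blast
  have Ac: "subprod G A es \<in> carrier G" for es using Ain SG by blast
  have AS: "\<phi> (subprod G A es) x = x" for es using Ain[of es] Sdef by (simp add: stabilizer_def)
  have y0E: "y0 \<in> E" using y0 by auto
  have setAc: "set A \<subseteq> carrier G" using setA SG by blast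
  let ?EA = "{e :: bool list. length e = length A}"
  have "subprod_prob G (\<lambda>g. \<phi> g x) (A @ [t]) (pA @ [p]) y =
     (\<Sum>e1\<in>?EA. bern_weight pA e1 * subprod_prob G (\<lambda>g. \<phi> (subprod G A e1 \<otimes> g) x) [t] [p] y)"
    using prob_append[OF is_group setAc, of "[t]" pA "[p]"] t lenA by simp
  also have "\<dots> = (\<Sum>e1\<in>?EA. p * (if \<phi> (subprod G A e1) y0 = y then bern_weight pA e1 else 0)
       + (if x = y then 1 - p else 0) * bern_weight pA e1)"
  proof (intro sum.cong refl)
    fix e1
    have c: "\<phi> (subprod G A e1 \<otimes> t) x = \<phi> (subprod G A e1) y0"
      using composition_rule[OF x Ac t(1)] t(2) by simp
    have d: "\<phi> (subprod G A e1 \<otimes> \<one>) x = x" using Ac AS by simp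
    show "bern_weight pA e1 * subprod_prob G (\<lambda>g. \<phi> (subprod G A e1 \<otimes> g) x) [t] [p] y =
      p * (if \<phi> (subprod G A e1) y0 = y then bern_weight pA e1 else 0)
       + (if x = y then 1 - p else 0) * bern_weight pA e1"
      unfolding prob_single[OF is_group t(1)] c d by (simp add: algebra_simps)
  qed
  also have "\<dots> = p * subprod_prob G (\<lambda>h. \<phi> h y0) A pA y + (if x = y then 1 - p else 0)"
    using sum_bern[of pA] lenA
    by (simp add: sum.distrib sum_distrib_left[symmetric] sum_distrib_right[symmetric] subprod_prob_def)
  also have "\<dots> = 1 / real (card E)"
  proof (cases "y = x")
    case True
    have "\<phi> (subprod G A e) y0 \<noteq> x" for e
    proof
      assume "\<phi> (subprod G A e) y0 = x"
      then have "\<phi> (subprod G A e) y0 = \<phi> (subprod G A e) x" using AS by simp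
      then have "y0 = x" using inj_prop[OF Ac] y0E x by (meson inj_onD)
      then show False using y0 by simp
    qed
    then have "subprod_prob G (\<lambda>h. \<phi> h y0) A pA y = 0"
      using True unfolding subprod_prob_def by simp
    then show ?thesis using True p n2 by (simp add: field_simps)
  next
    case False
    have cE: "card (E - {x}) = card E - 1" using x finE by simp
    have "real (card (E - {x})) = real (card E) - 1" using cE n2 by simp
    then have q: "subprod_prob G (\<lambda>h. \<phi> h y0) A pA y = 1 / (real (card E) - 1)"
      using False unifA y by simp
    have h1: "real (card E) - 1 \<noteq> 0" using n2 by simp
    have h2: "real (card E) \<noteq> 0" using n2 by simp
    have "p * (1 / (real (card E) - 1)) = 1 / real (card E)"
      unfolding p using h1 h2 by (simp add: field_simps)
    then show ?thesis using False q by simp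
  qed
  finally show ?thesis .
qed

lemma (in group_action) main_aux:
  assumes finG: "finite (carrier G)" and finE: "finite E" and n2: "2 \<le> card E"
    and tt: "\<forall>x1\<in>E. \<forall>x2\<in>E. \<forall>y1\<in>E. \<forall>y2\<in>E. x1 \<noteq> x2 \<longrightarrow> y1 \<noteq> y2 \<longrightarrow>
        (\<exists>g\<in>carrier G. \<phi> g x1 = y1 \<and> \<phi> g x2 = y2)"
    and x: "x \<in> E"
    and mixH: "mixable (G\<lparr>carrier := stabilizer G \<phi> x\<rparr>)"
  shows "mixable G \<and>
    mixlen G \<le> mixlen (G\<lparr>carrier := stabilizer G \<phi> x\<rparr>)
              + mixlen_action (G\<lparr>carrier := stabilizer G \<phi> x\<rparr>) \<phi> (E - {x}) + 1"
proof -
  interpret group G using group_hom group_hom.axioms(1) by auto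
  define S where "S = stabilizer G \<phi> x"
  have subS: "subgroup S G" unfolding S_def by (rule stabilizer_subgroup[OF x])
  have SG: "S \<subseteq> carrier G" using subS subgroup.subset by blast
  have finS: "finite S" using SG finG finite_subset by blast
  have oneS: "\<one> \<in> S" using subgroup.one_closed[OF subS] .
  have cardS: "card S > 0" using finS oneS card_gt_0_iff by blast
  have phi1: "\<phi> \<one> z = z" if "z \<in> E" for z
    using id_eq_one that by (metis restrict_apply')
  have trG: "\<exists>g\<in>carrier G. \<phi> g x = y" if y: "y \<in> E" for y
  proof (cases "y = x")
    case True then show ?thesis using phi1[OF x] by blast
  next
    case False
    then obtain g where "g \<in> carrier G" "\<phi> g x = y" using tt[rule_format, OF x y y x] by auto
    then show ?thesis by blast
  qed
  have trH: "\<exists>h\<in>S. \<phi> h y0 = y" if "y0 \<in> E - {x}" "y \<in> E - {x}" for y0 y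
  proof -
    have a1: "y0 \<in> E" "x \<noteq> y0" "y \<in> E" "x \<noteq> y" using that by auto
    obtain g where g: "g \<in> carrier G" "\<phi> g x = x" "\<phi> g y0 = y"
      using tt[rule_format, OF x a1(1) x a1(3) a1(2) a1(4)] by auto
    then show ?thesis unfolding S_def stabilizer_def by blast
  qed
  have mapsH: "\<phi> h y0 \<in> E - {x}" if h: "h \<in> S" and y0: "y0 \<in> E - {x}" for h y0
  proof -
    have hc: "h \<in> carrier G" and hx: "\<phi> h x = x" using h unfolding S_def stabilizer_def by auto
    have "\<phi> h y0 \<in> E" using element_image[OF hc] y0 by auto
    moreover have "\<phi> h y0 \<noteq> x"
    proof
      assume "\<phi> h y0 = x"
      then have "\<phi> h y0 = \<phi> h x" using hx by simp
      then have "y0 = x" using inj_prop[OF hc] y0 x by (meson DiffE inj_onD)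
      then show False using y0 by simp
    qed
    ultimately show ?thesis by simp
  qed
  have c1: "card S * card E = card (carrier G)"
  proof -
    have "card {g\<in>carrier G. \<phi> g x = x} * card E = card (carrier G)"
      by (rule fiber_count[OF subgroup_self finG subset_refl x finE _ trG x])
         (use element_image x in blast)+
    moreover have "{g\<in>carrier G. \<phi> g x = x} = S" unfolding S_def stabilizer_def by simp
    ultimately show ?thesis by simp
  qed
  have c2: "card {h\<in>S. \<phi> h y0 = y} * card (E - {x}) = card S"
    if y0: "y0 \<in> E - {x}" and y: "y \<in> E - {x}" for y0 y
    by (rule fiber_count[OF subS finS _ y0 _ _ _ y]) (use finE mapsH trH y0 in auto)
  have "\<exists>k. \<exists>gs ps. length gs = k \<and> mixing_subproduct (G\<lparr>carrier := S\<rparr>) gs ps"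
    using mixH unfolding mixable_def S_def by blast
  from LeastI_ex[OF this] obtain B pB where
    lenB: "length B = mixlen (G\<lparr>carrier := S\<rparr>)" and mB: "mixing_subproduct (G\<lparr>carrier := S\<rparr>) B pB"
    unfolding mixlen_def by blast
  have setB: "set B \<subseteq> S" and lenpB: "length pB = length B" and pBr: "\<forall>q\<in>set pB. 0 \<le> q \<and> q \<le> 1"
    and unifB: "\<forall>h\<in>S. subprod_prob G id B pB h = 1 / real (card S)"
    using mB unfolding mixing_subproduct_def valid_subproduct_def by auto
  have Bin: "subprod G B es \<in> S" for es using subprod_closed[OF subS setB] .
  obtain y1 where y1: "y1 \<in> E - {x}"
  proof -
    have "E - {x} \<noteq> {}"
    proof
      assume "E - {x} = {}"
      then have "E \<subseteq> {x}" by blast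
      then have "card E \<le> 1" using card_mono[of "{x}" E] by simp
      then show False using n2 by simp
    qed
    then show ?thesis using that by blast
  qed
  have "mixing_action_subproduct (G\<lparr>carrier := S\<rparr>) \<phi> (E - {x}) y1 B pB"
    unfolding mixing_action_subproduct_def
  proof (intro conjI ballI)
    show "valid_subproduct (G\<lparr>carrier := S\<rparr>) B pB"
      using mB unfolding mixing_subproduct_def by simp
    fix y assume y: "y \<in> E - {x}"
    let ?F = "{h\<in>S. \<phi> h y1 = y}"
    have "subprod_prob (G\<lparr>carrier := S\<rparr>) (\<lambda>h. \<phi> h y1) B pB y = (\<Sum>h\<in>?F. subprod_prob G id B pB h)"
      using prob_fibers[OF finS Bin] by simp
    also have "\<dots> = real (card ?F) * (1 / real (card S))" using unifB by simp
    also have "\<dots> = 1 / real (card (E - {x}))"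
    proof -
      have e: "real (card ?F) * real (card (E - {x})) = real (card S)"
        using c2[OF y1 y] by (metis of_nat_mult)
      have "card (E - {x}) \<noteq> 0" using c2[OF y1 y] cardS by (metis less_irrefl mult_0_right)
      then have "real (card (E - {x})) \<noteq> 0" by simp
      then show ?thesis using e cardS by (simp add: field_simps)
    qed
    finally show "subprod_prob (G\<lparr>carrier := S\<rparr>) (\<lambda>h. \<phi> h y1) B pB y = 1 / real (card (E - {x}))" .
  qed
  then have "\<exists>k. \<exists>y0\<in>E - {x}. \<exists>gs ps. length gs = k \<and>
      mixing_action_subproduct (G\<lparr>carrier := S\<rparr>) \<phi> (E - {x}) y0 gs ps"
    using y1 by blast
  from LeastI_ex[OF this] obtain y0 A pA where
    y0: "y0 \<in> E - {x}" and lenA: "length A = mixlen_action (G\<lparr>carrier := S\<rparr>) \<phi> (E - {x})"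
    and mA: "mixing_action_subproduct (G\<lparr>carrier := S\<rparr>) \<phi> (E - {x}) y0 A pA"
    unfolding mixlen_action_def by blast
  have setA: "set A \<subseteq> S" and lenpA: "length pA = length A" and pAr: "\<forall>q\<in>set pA. 0 \<le> q \<and> q \<le> 1"
    and unifA: "\<forall>y\<in>E-{x}. subprod_prob G (\<lambda>h. \<phi> h y0) A pA y = 1 / real (card (E - {x}))"
    using mA unfolding mixing_action_subproduct_def valid_subproduct_def by auto
  have Ain: "subprod G A es \<in> S" for es using subprod_closed[OF subS setA] .
  obtain t where t: "t \<in> carrier G" "\<phi> t x = y0" using trG y0 by blast
  define p where "p = (real (card E) - 1) / real (card E)"
  have p01: "0 \<le> p \<and> p \<le> 1" using n2 unfolding p_def by (simp add: field_simps)
  define gs where "gs = (A @ [t]) @ B"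
  define ps where "ps = (pA @ [p]) @ pB"
  have setAt: "set (A @ [t]) \<subseteq> carrier G" using setA SG t by auto
  have setBc: "set B \<subseteq> carrier G" using setB SG by auto
  have mix: "mixing_subproduct G gs ps"
    unfolding mixing_subproduct_def valid_subproduct_def
  proof (intro conjI ballI)
    show "set gs \<subseteq> carrier G" using setAt setBc unfolding gs_def by auto
    show "length ps = length gs" using lenpA lenpB unfolding gs_def ps_def by simp
    fix q assume "q \<in> set ps"
    then show "0 \<le> q" "q \<le> 1" using pAr pBr p01 unfolding ps_def by auto
  next
    fix a assume a: "a \<in> carrier G"
    let ?E1 = "{e :: bool list. length e = length (A @ [t])}"
    have s1c: "subprod G (A @ [t]) e \<in> carrier G" for e
      using subprod_closed[OF subgroup_self setAt] .
    have "subprod_prob G id gs ps a =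
      (\<Sum>e1\<in>?E1. bern_weight (pA @ [p]) e1 * subprod_prob G (\<lambda>g. id (subprod G (A @ [t]) e1 \<otimes> g)) B pB a)"
      unfolding gs_def ps_def
      by (rule prob_append[OF is_group setAt setBc]) (use lenpA lenpB in simp_all)
    also have "\<dots> = (\<Sum>e1\<in>?E1. bern_weight (pA @ [p]) e1 *
        (if \<phi> a x = \<phi> (subprod G (A @ [t]) e1) x then 1 / real (card S) else 0))"
      using inner_lemma[OF subS S_def x Bin unifB s1c a] by simp
    also have "\<dots> = (1 / real (card S)) * subprod_prob G (\<lambda>g. \<phi> g x) (A @ [t]) (pA @ [p]) (\<phi> a x)"
      unfolding subprod_prob_def sum_distrib_left
    proof (intro sum.cong refl)
      fix e1
      show "bern_weight (pA @ [p]) e1 * (if \<phi> a x = \<phi> (subprod G (A @ [t]) e1) x then 1 / real (card S) else 0) =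
         1 / real (card S) * (if \<phi> (subprod G (A @ [t]) e1) x = \<phi> a x then bern_weight (pA @ [p]) e1 else 0)"
        by (cases "\<phi> a x = \<phi> (subprod G (A @ [t]) e1) x") auto
    qed
    also have "\<dots> = (1 / real (card S)) * (1 / real (card E))"
      using left_lemma[OF subS S_def x finE n2 Ain setA lenpA t y0 unifA p_def] element_image[OF a x] by simp
    also have "\<dots> = 1 / real (card (carrier G))"
    proof -
      have "real (card (carrier G)) = real (card S) * real (card E)" using c1 by (metis of_nat_mult)
      then show ?thesis by simp
    qed
    finally show "subprod_prob G id gs ps a = 1 / real (card (carrier G))" .
  qed
  have "mixlen G \<le> length gs"
    unfolding mixlen_def using mix by (intro Least_le) blast
  moreover have "length gs = mixlen (G\<lparr>carrier := S\<rparr>) + mixlen_action (G\<lparr>carrier := S\<rparr>) \<phi> (E - {x}) + 1"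
    unfolding gs_def using lenA lenB by simp
  ultimately show ?thesis using mix unfolding mixable_def S_def by auto
qed

theorem mainTheorem16:
  fixes G :: "('a, 'm) monoid_scheme" and X :: "'b set" and \<phi> :: "'a \<Rightarrow> 'b \<Rightarrow> 'b" and x :: 'b
  assumes "group G" and "finite (carrier G)" and "finite X"
    and "two_transitive_action G X \<phi>"
    and "x \<in> X"
    and "mixable (G\<lparr>carrier := stabilizer G \<phi> x\<rparr>)"
  shows "mixable G \<and>
    mixlen G \<le> mixlen (G\<lparr>carrier := stabilizer G \<phi> x\<rparr>)
              + mixlen_action (G\<lparr>carrier := stabilizer G \<phi> x\<rparr>) \<phi> (X - {x}) + 1"
proof -
  have ga: "group_action G X \<phi>" and n2: "2 \<le> card X"
    and tt: "\<forall>x1\<in>X. \<forall>x2\<in>X. \<forall>y1\<in>X. \<forall>y2\<in>X. x1 \<noteq> x2 \<longrightarrow> y1 \<noteq> y2 \<longrightarrow>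
        (\<exists>g\<in>carrier G. \<phi> g x1 = y1 \<and> \<phi> g x2 = y2)"
    using assms(4) unfolding two_transitive_action_def by auto
  show ?thesis by (rule group_action.main_aux[OF ga assms(2) assms(3) n2 tt assms(5) assms(6)])
qed

end
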